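(* For scheduling without payments any number $m$ of tasks on any number $n$ of machines, the Greedy algorithm has Price of Stability $1$ (with respect to mixed Nash equilibria): for every true instance, there is a mixed Nash equilibrium of Greedy whose expected makespan equals the optimal makespan.
   Context: Model: $n$ machines, $m$ indivisible tasks; machine $i$ has private true times $t_{i,j}\ge0$ and declares $\hat t_{i,j}\ge0$. Machines are bound by their declarations: machine $i$ executes an assigned task $j$ for time $\max\{\hat t_{i,j},t_{i,j}\}$. The Greedy algorithm assigns each task $j$ independently to a machine with minimum declared cost $\hat t_{i,j}$ (ties broken arbitrarily). In a mixed strategy profile each machine independently draws her declaration matrix row from a probability distribution; a machine's cost is her expected total execution time $\mathbb E[\sum_j A_{i,j}\max\{\hat t_{i,j},t_{i,j}\}]$, where $A_{i,j}$ indicates that task $j$ is assigned to $i$. A mixed Nash equilibrium is a profile in which no machine can strictly decrease her expected cost by unilaterally changing her strategy. The makespan of a profile is $\mathbb E[\max_i\sum_jA_{i,j}\max\{\hat t_{i,j},t_{i,j}\}]$, and the optimal makespan is $\min_A\max_i\sum_jA_{i,j}t_{i,j}$ over integral allocations. The Price of Stability is the supremum over instances of the ratio between the makespan of the best mixed Nash equilibrium and the optimal makespan. *)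

theory Defs
  imports "HOL-Probability.Probability"
begin

(* Machines are indexed by {..<n}, tasks by {..<m}.
   A declaration matrix D :: nat => nat => real has D i j = declared time of machine i for task j.
   A tie-breaking rule tb :: nat => (nat => real) => nat maps a task j and the declared column
   (lambda i. D i j) to the chosen machine. *)

definition valid_tiebreak :: "nat \<Rightarrow> nat \<Rightarrow> (nat \<Rightarrow> (nat \<Rightarrow> real) \<Rightarrow> nat) \<Rightarrow> bool" where
  "valid_tiebreak n m tb \<longleftrightarrow>
     (\<forall>j<m. \<forall>c. tb j c < n \<and> (\<forall>i<n. c (tb j c) \<le> c i))"

definition greedy_assign :: "(nat \<Rightarrow> (nat \<Rightarrow> real) \<Rightarrow> nat) \<Rightarrow> (nat \<Rightarrow> nat \<Rightarrow> real) \<Rightarrow> nat \<Rightarrow> nat" where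
  "greedy_assign tb D j = tb j (\<lambda>i. D i j)"

(* realized execution load of machine i: bound by declarations, executes for max(decl, true) *)
definition load :: "nat \<Rightarrow> (nat \<Rightarrow> nat \<Rightarrow> real) \<Rightarrow> (nat \<Rightarrow> (nat \<Rightarrow> real) \<Rightarrow> nat)
                     \<Rightarrow> (nat \<Rightarrow> nat \<Rightarrow> real) \<Rightarrow> nat \<Rightarrow> real" where
  "load m t tb D i = (\<Sum>j<m. if greedy_assign tb D j = i then max (D i j) (t i j) else 0)"

definition valid_strategy :: "nat \<Rightarrow> (nat \<Rightarrow> real) pmf \<Rightarrow> bool" where
  "valid_strategy m p \<longleftrightarrow> (\<forall>d\<in>set_pmf p. \<forall>j<m. d j \<ge> 0)"

definition valid_profile :: "nat \<Rightarrow> nat \<Rightarrow> (nat \<Rightarrow> (nat \<Rightarrow> real) pmf) \<Rightarrow> bool" where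
  "valid_profile n m \<sigma> \<longleftrightarrow> (\<forall>i<n. valid_strategy m (\<sigma> i))"

definition joint :: "nat \<Rightarrow> (nat \<Rightarrow> (nat \<Rightarrow> real) pmf) \<Rightarrow> (nat \<Rightarrow> nat \<Rightarrow> real) pmf" where
  "joint n \<sigma> = Pi_pmf {..<n} (\<lambda>_. 0) \<sigma>"

definition exp_cost :: "nat \<Rightarrow> nat \<Rightarrow> (nat \<Rightarrow> nat \<Rightarrow> real) \<Rightarrow> (nat \<Rightarrow> (nat \<Rightarrow> real) \<Rightarrow> nat)
                        \<Rightarrow> (nat \<Rightarrow> (nat \<Rightarrow> real) pmf) \<Rightarrow> nat \<Rightarrow> ennreal" where
  "exp_cost n m t tb \<sigma> i = (\<integral>\<^sup>+ D. ennreal (load m t tb D i) \<partial>measure_pmf (joint n \<sigma>))"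

definition exp_makespan :: "nat \<Rightarrow> nat \<Rightarrow> (nat \<Rightarrow> nat \<Rightarrow> real) \<Rightarrow> (nat \<Rightarrow> (nat \<Rightarrow> real) \<Rightarrow> nat)
                        \<Rightarrow> (nat \<Rightarrow> (nat \<Rightarrow> real) pmf) \<Rightarrow> ennreal" where
  "exp_makespan n m t tb \<sigma> =
     (\<integral>\<^sup>+ D. ennreal (Max ((\<lambda>i. load m t tb D i) ` {..<n})) \<partial>measure_pmf (joint n \<sigma>))"

definition mixed_NE :: "nat \<Rightarrow> nat \<Rightarrow> (nat \<Rightarrow> nat \<Rightarrow> real) \<Rightarrow> (nat \<Rightarrow> (nat \<Rightarrow> real) \<Rightarrow> nat)
                        \<Rightarrow> (nat \<Rightarrow> (nat \<Rightarrow> real) pmf) \<Rightarrow> bool" where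
  "mixed_NE n m t tb \<sigma> \<longleftrightarrow> valid_profile n m \<sigma> \<and>
     (\<forall>i<n. \<forall>\<tau>. valid_strategy m \<tau> \<longrightarrow>
        exp_cost n m t tb \<sigma> i \<le> exp_cost n m t tb (\<sigma>(i := \<tau>)) i)"

definition opt_makespan :: "nat \<Rightarrow> nat \<Rightarrow> (nat \<Rightarrow> nat \<Rightarrow> real) \<Rightarrow> real" where
  "opt_makespan n m t =
     Min ((\<lambda>A. Max ((\<lambda>i. \<Sum>j\<in>{j. j < m \<and> A j = i}. t i j) ` {..<n})) ` ({..<m} \<rightarrow>\<^sub>E {..<n}))"

end

theory Submission
  imports Defs
begin

lemma geom_sum: "(\<Sum>i<k. pmf (geometric_pmf (1/2)) i) = 1 - (1/2::real)^k"
  by (induction k) (simp_all add: field_simps)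

lemma geom_tail: "measure_pmf.prob (geometric_pmf (1/2)) {k..} = (1/2::real)^k"
proof -
  have "measure_pmf.prob (geometric_pmf (1/2)) {..<k} = 1 - (1/2::real)^k"
    using geom_sum[of k] by (simp add: measure_measure_pmf_finite)
  moreover have "{k..} = UNIV - {..<k}" by auto
  ultimately show ?thesis
    using measure_pmf.prob_compl[of "{..<k}" "geometric_pmf (1/2)"] by simp
qed

definition Pd :: "real \<Rightarrow> nat \<Rightarrow> real pmf" where
  "Pd T n = map_pmf (\<lambda>k. T * 2^((k+1)*(n-1))) (geometric_pmf (1/2))"

lemma Pd_ge: "T > 0 \<Longrightarrow> x \<in> set_pmf (Pd T n) \<Longrightarrow> x \<ge> T"
  unfolding Pd_def by (auto simp: mult_le_cancel_left1)

lemma L1: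
  assumes T: "T > 0" and t: "0 \<le> t" "t \<le> T"
  shows "t \<le> max c t * (measure_pmf.prob (Pd T n) {x. x > c})^(n-1)"
proof (cases "c < T")
  case True
  have "{x. x > c} \<supseteq> set_pmf (Pd T n)" using Pd_ge[OF T] True by force
  hence "measure_pmf.prob (Pd T n) {x. x > c} = 1"
    by (simp add: measure_pmf.prob_eq_1 AE_measure_pmf_iff subset_eq)
  thus ?thesis by simp
next
  case False
  show ?thesis
  proof (cases "n \<le> 1")
    case True thus ?thesis by simp
  next
    case False2: False
    hence n1: "n - 1 \<ge> 1" by simp
    have ex: "\<exists>k. c < T * 2^((k+1)*(n-1))"
    proof -
      obtain k :: nat where k: "c / T < k" using reals_Archimedean2 by blast
      have "real k \<le> 2^k" using less_exp[of k] by (metis less_imp_le of_nat_le_iff of_nat_numeral of_nat_power)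
      also have "\<dots> \<le> 2^((k+1)*(n-1))" proof (intro power_increasing) show "k \<le> (k+1)*(n-1)" using n1 mult_le_mono[of k "k+1" 1 "n-1"] by simp qed auto
      finally have "real k \<le> 2^((k+1)*(n-1))" .
      hence "T * real k \<le> T * 2^((k+1)*(n-1))" using T by (intro mult_left_mono) auto
      moreover have "c < T * real k" using k T by (simp add: field_simps)
      ultimately have "c < T * 2^((k+1)*(n-1))" by linarith
      thus ?thesis by blast
    qed
    define k where "k = (LEAST k. c < T * 2^((k+1)*(n-1)))"
    have k1: "c < T * 2^((k+1)*(n-1))" unfolding k_def by (rule LeastI_ex[OF ex])
    have k2: "T * 2^(k*(n-1)) \<le> c"
    proof (cases k)
      case 0 thus ?thesis using \<open>\<not> c < T\<close> by simp
    next
      case (Suc k')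
      have "\<not> c < T * 2^((k'+1)*(n-1))"
        using not_less_Least[of k' "\<lambda>k. c < T * 2^((k+1)*(n-1))"] Suc k_def by auto
      thus ?thesis using Suc by simp
    qed
    have sub: "{l. l \<ge> k} \<subseteq> (\<lambda>l. T * 2^((l+1)*(n-1))) -` {x. x > c}"
    proof
      fix l assume "l \<in> {l. l \<ge> k}"
      hence "(k+1)*(n-1) \<le> (l+1)*(n-1)" by simp
      hence "(2::real)^((k+1)*(n-1)) \<le> 2^((l+1)*(n-1))" by (intro power_increasing) auto
      thus "l \<in> (\<lambda>l. T * 2^((l+1)*(n-1))) -` {x. x > c}" using k1 T
        by (smt (verit) mult_left_mono vimage_Collect_eq mem_Collect_eq)
    qed
    have A: "measure_pmf.prob (geometric_pmf (1/2)) {l. l \<ge> k} \<le> measure_pmf.prob (geometric_pmf (1/2)) ((\<lambda>l. T * 2^((l+1)*(n-1))) -` {x. x > c})"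
      by (rule measure_pmf.finite_measure_mono[OF sub]) simp
    have B: "{l. l \<ge> k} = {k..}" by auto
    have "(1/2::real)^k \<le> measure_pmf.prob (Pd T n) {x. x > c}"
      unfolding Pd_def measure_map_pmf
      using geom_tail[of k] A unfolding B by simp
    hence "((1/2::real)^k)^(n-1) \<le> (measure_pmf.prob (Pd T n) {x. x > c})^(n-1)"
      by (intro power_mono) auto
    hence "c * ((1/2::real)^k)^(n-1) \<le> c * (measure_pmf.prob (Pd T n) {x. x > c})^(n-1)"
      using T \<open>\<not> c < T\<close> by (intro mult_left_mono) auto
    moreover have "c * ((1/2::real)^k)^(n-1) \<ge> T"
    proof -
      have "((1/2::real)^k)^(n-1) = 1 / 2^(k*(n-1))" by (simp add: power_mult power_one_over)
      thus ?thesis using k2 by (simp add: field_simps)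
    qed
    moreover have "max c t = c" using t \<open>\<not> c < T\<close> by simp
    ultimately show ?thesis using t by simp
  qed
qed
lemma dev:
  assumes vt: "valid_tiebreak n m tb" and a: "a < n" and j: "j < m" and Aj: "A j = a"
    and T: "T > 0" and t: "0 \<le> t a j" "t a j \<le> T"
    and sig: "\<sigma> = (\<lambda>i. map_pmf (\<lambda>x j. if A j = i then 0 else x) (Pd T n))"
  shows "ennreal (t a j) \<le> (\<integral>\<^sup>+D. ennreal (if greedy_assign tb D j = a then max (D a j) (t a j) else 0) \<partial>measure_pmf (joint n (\<sigma>(a:=\<tau>))))"
proof -
  define B where "B = {..<n} - {a}"
  have ins: "{..<n} = insert a B" "a \<notin> B" "finite B" using a unfolding B_def by auto
  have cB: "card B = n - 1" unfolding B_def using a by simp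
  define g where "g = (\<lambda>D. ennreal (if greedy_assign tb D j = a then max (D a j) (t a j) else 0))"
  have J: "joint n (\<sigma>(a:=\<tau>)) = map_pmf (\<lambda>(y,f). f(a:=y)) (pair_pmf \<tau> (Pi_pmf B (\<lambda>_. 0) \<sigma>))"
  proof -
    have "Pi_pmf B (\<lambda>_. 0) (\<sigma>(a:=\<tau>)) = Pi_pmf B (\<lambda>_. 0) \<sigma>"
      by (rule Pi_pmf_cong) (use ins in auto)
    thus ?thesis unfolding joint_def ins(1) using Pi_pmf_insert[OF ins(3) ins(2), of "\<lambda>_. 0" "\<sigma>(a:=\<tau>)"]
      by simp
  qed
  have inner: "ennreal (t a j) \<le> (\<integral>\<^sup>+f. g (f(a:=y)) \<partial>measure_pmf (Pi_pmf B (\<lambda>_. 0) \<sigma>))" for y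
  proof -
    define q where "q = measure_pmf.prob (Pd T n) {x. x > y j}"
    have pt: "ennreal (max (y j) (t a j)) * (\<Prod>b\<in>B. indicator {d. d j > y j} (f b)) \<le> g (f(a:=y))" for f
    proof (cases "\<forall>b\<in>B. f b j > y j")
      case True
      define c where "c = (\<lambda>i. (f(a:=y)) i j)"
      have "tb j c < n" "\<forall>i<n. c (tb j c) \<le> c i" using vt j unfolding valid_tiebreak_def by auto
      hence "tb j c = a" using True a unfolding c_def B_def
        by (metis DiffI fun_upd_other fun_upd_same insertCI leD lessThan_iff singletonD)
      hence "greedy_assign tb (f(a:=y)) j = a" unfolding greedy_assign_def c_def by simp
      thus ?thesis unfolding g_def using True by (simp add: indicator_def)
    next
      case False
      then obtain b where "b \<in> B" "\<not> f b j > y j" by auto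
      hence "(\<Prod>b\<in>B. indicator {d. d j > y j} (f b) :: ennreal) = 0"
        using ins(3) by (intro prod_zero) (auto simp: indicator_def)
      thus ?thesis by (metis mult_zero_right zero_le)
    qed
    have em: "(\<integral>\<^sup>+d. indicator {d. d j > y j} d \<partial>measure_pmf (\<sigma> b)) = ennreal q" if "b \<in> B" for b
    proof -
      have "A j \<noteq> b" using that Aj unfolding B_def by auto
      hence e: "(\<lambda>x. indicator {d. d j > y j} (\<lambda>j'. if A j' = b then 0 else x) :: ennreal) = indicator {x. x > y j}"
        by (auto simp: indicator_def)
      show ?thesis unfolding sig q_def nn_integral_map_pmf e
        by (simp add: measure_pmf.emeasure_eq_measure)
    qed
    have "ennreal (t a j) \<le> ennreal (max (y j) (t a j) * q ^ (n-1))"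
      unfolding q_def by (rule ennreal_leI[OF L1[OF T t]])
    also have "\<dots> = ennreal (max (y j) (t a j)) * (\<Prod>b\<in>B. ennreal q)"
      using cB t(1) by (subst ennreal_mult) (auto simp: ennreal_power q_def)
    also have "\<dots> = ennreal (max (y j) (t a j)) * (\<Prod>b\<in>B. \<integral>\<^sup>+d. indicator {d. d j > y j} d \<partial>measure_pmf (\<sigma> b))"
      using em by simp
    also have "\<dots> = ennreal (max (y j) (t a j)) * (\<integral>\<^sup>+f. (\<Prod>b\<in>B. indicator {d. d j > y j} (f b)) \<partial>measure_pmf (Pi_pmf B (\<lambda>_. 0) \<sigma>))"
      using nn_integral_prod_Pi_pmf[OF ins(3), of "\<lambda>_. 0" \<sigma> "\<lambda>b d. indicator {d. d j > y j} d"] by simp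
    also have "\<dots> = (\<integral>\<^sup>+f. ennreal (max (y j) (t a j)) * (\<Prod>b\<in>B. indicator {d. d j > y j} (f b)) \<partial>measure_pmf (Pi_pmf B (\<lambda>_. 0) \<sigma>))"
      by (rule nn_integral_cmult[symmetric]) simp
    also have "\<dots> \<le> (\<integral>\<^sup>+f. g (f(a:=y)) \<partial>measure_pmf (Pi_pmf B (\<lambda>_. 0) \<sigma>))"
      by (intro nn_integral_mono pt)
    finally show ?thesis .
  qed
  have "ennreal (t a j) = (\<integral>\<^sup>+y. ennreal (t a j) \<partial>measure_pmf \<tau>)" by simp
  also have "\<dots> \<le> (\<integral>\<^sup>+y. (\<integral>\<^sup>+f. g (f(a:=y)) \<partial>measure_pmf (Pi_pmf B (\<lambda>_. 0) \<sigma>)) \<partial>measure_pmf \<tau>)"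
    by (intro nn_integral_mono inner)
  also have "\<dots> = (\<integral>\<^sup>+D. g D \<partial>measure_pmf (joint n (\<sigma>(a:=\<tau>))))"
    unfolding J by (simp add: nn_integral_pair_pmf')
  finally show ?thesis unfolding g_def .
qed

lemma support_load:
  assumes vt: "valid_tiebreak n m tb" and T: "T > 0"
    and A: "A \<in> {..<m} \<rightarrow>\<^sub>E {..<n}"
    and nn: "\<forall>i<n. \<forall>j<m. t i j \<ge> 0"
    and sig: "\<sigma> = (\<lambda>i. map_pmf (\<lambda>x j. if A j = i then 0 else x) (Pd T n))"
    and D: "D \<in> set_pmf (joint n \<sigma>)" and i: "i < n"
  shows "load m t tb D i = (\<Sum>j<m. if A j = i then t i j else 0)"
proof -
  have Ds: "\<forall>i<n. \<exists>x\<in>set_pmf (Pd T n). D i = (\<lambda>j. if A j = i then 0 else x)"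
    using D unfolding joint_def set_Pi_pmf[OF finite_lessThan] PiE_dflt_def sig by auto
  have g: "greedy_assign tb D j = A j" if j: "j < m" for j
  proof -
    define c where "c = (\<lambda>i. D i j)"
    have Ajn: "A j < n" using A j by auto
    have c0: "c (A j) = 0" using Ds Ajn unfolding c_def by force
    have cpos: "c i' > 0" if i'n: "i' < n" and ne: "i' \<noteq> A j" for i'
    proof -
      obtain x where "x \<in> set_pmf (Pd T n)" "D i' = (\<lambda>j. if A j = i' then 0 else x)" using Ds i'n by blast
      thus ?thesis using Pd_ge[OF T] T ne unfolding c_def by force
    qed
    have "tb j c < n" "c (tb j c) \<le> c (A j)" using vt j Ajn unfolding valid_tiebreak_def by auto
    hence "tb j c = A j" using c0 cpos by force
    thus ?thesis unfolding greedy_assign_def c_def by simp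
  qed
  have "load m t tb D i = (\<Sum>j<m. if A j = i then max (D i j) (t i j) else 0)"
    unfolding load_def using g by (intro sum.cong) auto
  also have "\<dots> = (\<Sum>j<m. if A j = i then t i j else 0)"
  proof (intro sum.cong refl)
    fix j assume j: "j \<in> {..<m}"
    obtain x where "D i = (\<lambda>j. if A j = i then 0 else x)" using Ds i by blast
    thus "(if A j = i then max (D i j) (t i j) else 0) = (if A j = i then t i j else 0)"
      using nn i j by auto
  qed
  finally show ?thesis .
qed

theorem theorem8:
  fixes n m :: nat and t :: "nat \<Rightarrow> nat \<Rightarrow> real"
    and tb :: "nat \<Rightarrow> (nat \<Rightarrow> real) \<Rightarrow> nat"
  assumes "n \<ge> 1"
    and "\<forall>i<n. \<forall>j<m. t i j \<ge> 0"
    and "valid_tiebreak n m tb"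
  shows "\<exists>\<sigma>. mixed_NE n m t tb \<sigma> \<and> exp_makespan n m t tb \<sigma> = ennreal (opt_makespan n m t)"
proof -
  note n1 = assms(1) and nn = assms(2) and vt = assms(3)
  define F where "F = (\<lambda>A. Max ((\<lambda>i. \<Sum>j\<in>{j. j < m \<and> A j = i}. t i j) ` {..<n}))"
  define S where "S = ({..<m} \<rightarrow>\<^sub>E {..<n})"
  have finS: "finite S" unfolding S_def by (simp add: finite_PiE)
  have "(\<lambda>j\<in>{..<m}. 0) \<in> S" unfolding S_def using n1 by auto
  hence neS: "S \<noteq> {}" by blast
  have "opt_makespan n m t \<in> F ` S" unfolding opt_makespan_def F_def[symmetric] S_def[symmetric]
    using finS neS by (intro Min_in) auto
  then obtain A where AS: "A \<in> S" and FA: "F A = opt_makespan n m t" by auto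
  define T where "T = 1 + (\<Sum>i<n. \<Sum>j<m. t i j)"
  have sum0: "0 \<le> (\<Sum>i<n. \<Sum>j<m. t i j)" using nn by (intro sum_nonneg) auto
  hence T0: "T > 0" unfolding T_def by simp
  have tT: "t i j \<le> T" if "i < n" "j < m" for i j
  proof -
    have "t i j \<le> (\<Sum>j<m. t i j)" using nn that by (intro member_le_sum) auto
    also have "\<dots> \<le> (\<Sum>i<n. \<Sum>j<m. t i j)" using nn that
      by (intro member_le_sum[of i "{..<n}" "\<lambda>i. \<Sum>j<m. t i j"]) (auto intro!: sum_nonneg)
    finally show ?thesis unfolding T_def by simp
  qed
  define \<sigma> where "\<sigma> = (\<lambda>i. map_pmf (\<lambda>x j. if A j = i then 0 else x) (Pd T n))"
  define L where "L = (\<lambda>i. \<Sum>j<m. if A j = i then t i j else 0)"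
  have AS': "A \<in> {..<m} \<rightarrow>\<^sub>E {..<n}" using AS S_def by simp
  have sl: "load m t tb D i = L i" if "D \<in> set_pmf (joint n \<sigma>)" "i < n" for D i
    unfolding L_def by (rule support_load[OF vt T0 AS' nn \<sigma>_def that])
  have cost: "exp_cost n m t tb \<sigma> i = ennreal (L i)" if i: "i < n" for i
  proof -
    have "exp_cost n m t tb \<sigma> i = (\<integral>\<^sup>+ D. ennreal (L i) \<partial>measure_pmf (joint n \<sigma>))"
      unfolding exp_cost_def by (intro nn_integral_cong_AE) (simp add: AE_measure_pmf_iff sl i)
    thus ?thesis by simp
  qed
  have mk: "exp_makespan n m t tb \<sigma> = ennreal (Max (L ` {..<n}))"
  proof -
    have "exp_makespan n m t tb \<sigma> = (\<integral>\<^sup>+ D. ennreal (Max (L ` {..<n})) \<partial>measure_pmf (joint n \<sigma>))"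
      unfolding exp_makespan_def
    proof (intro nn_integral_cong_AE)
      show "AE D in measure_pmf (joint n \<sigma>). ennreal (Max ((\<lambda>i. load m t tb D i) ` {..<n})) = ennreal (Max (L ` {..<n}))"
        unfolding AE_measure_pmf_iff
      proof
        fix D assume "D \<in> set_pmf (joint n \<sigma>)"
        hence "(\<lambda>i. load m t tb D i) ` {..<n} = L ` {..<n}" using sl by (intro image_cong) auto
        thus "ennreal (Max ((\<lambda>i. load m t tb D i) ` {..<n})) = ennreal (Max (L ` {..<n}))" by simp
      qed
    qed
    thus ?thesis by simp
  qed
  have LF: "L i = (\<Sum>j\<in>{j. j < m \<and> A j = i}. t i j)" for i
  proof -
    have "{j. j < m \<and> A j = i} = {j \<in> {..<m}. A j = i}" by auto
    thus ?thesis unfolding L_def using sum.inter_filter[OF finite_lessThan, where g="t i" and P="\<lambda>j. A j = i"] by simp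
  qed
  have "Max (L ` {..<n}) = F A" unfolding F_def LF by simp
  hence mk2: "exp_makespan n m t tb \<sigma> = ennreal (opt_makespan n m t)" using mk FA by simp
  have vp: "valid_profile n m \<sigma>"
    unfolding valid_profile_def valid_strategy_def \<sigma>_def using Pd_ge[OF T0] T0 by fastforce
  have ne: "exp_cost n m t tb \<sigma> a \<le> exp_cost n m t tb (\<sigma>(a := \<tau>)) a" if a: "a < n" for a \<tau>
  proof -
    define J where "J = {j. j < m \<and> A j = a}"
    have J: "J \<subseteq> {..<m}" "finite J" unfolding J_def by auto
    define h where "h = (\<lambda>j D. ennreal (if greedy_assign tb D j = a then max (D a j) (t a j) else 0))"
    have "exp_cost n m t tb \<sigma> a = ennreal (\<Sum>j\<in>J. t a j)" using cost a LF J_def by simp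
    also have "\<dots> = (\<Sum>j\<in>J. ennreal (t a j))" using nn a J by (intro sum_ennreal[symmetric]) auto
    also have "\<dots> \<le> (\<Sum>j\<in>J. \<integral>\<^sup>+D. h j D \<partial>measure_pmf (joint n (\<sigma>(a:=\<tau>))))"
    proof (intro sum_mono)
      fix j assume "j \<in> J"
      hence j: "j < m" "A j = a" unfolding J_def by auto
      show "ennreal (t a j) \<le> (\<integral>\<^sup>+D. h j D \<partial>measure_pmf (joint n (\<sigma>(a:=\<tau>))))"
      proof -
        have t0: "0 \<le> t a j" using nn a j by auto
        show ?thesis unfolding h_def by (rule dev[where A=A and t=t and \<tau>=\<tau>, OF vt a j T0 t0 tT[OF a j(1)] \<sigma>_def])
      qed
    qed
    also have "\<dots> = (\<integral>\<^sup>+D. (\<Sum>j\<in>J. h j D) \<partial>measure_pmf (joint n (\<sigma>(a:=\<tau>))))"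
      by (rule nn_integral_sum[symmetric]) simp
    also have "\<dots> \<le> exp_cost n m t tb (\<sigma>(a := \<tau>)) a"
      unfolding exp_cost_def
    proof (intro nn_integral_mono)
      fix D
      define fD where "fD = (\<lambda>j. if greedy_assign tb D j = a then max (D a j) (t a j) else 0)"
      have nnt: "0 \<le> fD j" if "j < m" for j
      proof - have "0 \<le> t a j" using nn a that by auto thus ?thesis unfolding fD_def by (simp add: le_max_iff_disj) qed
      have "(\<Sum>j\<in>J. h j D) = (\<Sum>j\<in>J. ennreal (fD j))" unfolding h_def fD_def by simp
      also have "\<dots> = ennreal (\<Sum>j\<in>J. fD j)"
        using J nnt by (intro sum_ennreal) auto
      also have "\<dots> \<le> ennreal (\<Sum>j<m. fD j)"
        using J nnt by (intro ennreal_leI sum_mono2) auto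
      also have "\<dots> = ennreal (load m t tb D a)" unfolding load_def fD_def by simp
      finally show "(\<Sum>j\<in>J. h j D) \<le> ennreal (load m t tb D a)" .
    qed
    finally show ?thesis .
  qed
  have "mixed_NE n m t tb \<sigma>" unfolding mixed_NE_def using vp ne by auto
  thus ?thesis using mk2 by blast
qed

end
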